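(* For any $(\mu,\varphi,\omega^*,\omega^\varepsilon)\in\mathbb F^\times\times\mathbb F^3$: (i) there exists $(a,b,c,\lambda)\in(\mathbb F^\times)^4$ that is feasible for $(\mu,\varphi,\omega^*,\omega^\varepsilon)$; (ii) if $(a,b,c,\lambda)$ is feasible for $(\mu,\varphi,\omega^*,\omega^\varepsilon)$, then the equivalence class of $(a,b,c,\lambda)$ under $\approx$ consists exactly of all elements of $(\mathbb F^\times)^4$ that are feasible for $(\mu,\varphi,\omega^*,\omega^\varepsilon)$.
   Context: $\mathbb F$ is an algebraically closed field and $q\in\mathbb F^\times$ is a root of unity of order $d\notin\{1,2,4\}$. $\sqrt{x}$ denotes a fixed root of $t^2-x$. $(a,b,c,\lambda)\in(\mathbb F^\times)^4$ is feasible for $(\mu,\varphi,\omega^*,\omega^\varepsilon)\in\mathbb F^\times\times\mathbb F^3$ if $\mu=b\lambda^{-1}$, $\varphi=(c+c^{-1})(\lambda-\lambda^{-1})-(a+a^{-1})(bq-b^{-1}q^{-1})$, $\omega^*=(c+c^{-1})(a+a^{-1})+(b+b^{-1})(\lambda q+\lambda^{-1}q^{-1})$, $\omega^\varepsilon=(a+a^{-1})(b+b^{-1})+(c+c^{-1})(\lambda q+\lambda^{-1}q^{-1})$. $\{\pm1\}$ acts on $(\mathbb F^\times)^4$ by $(-1)\cdot(a,b,c,\lambda)=(-a,-b,-c,-\lambda)$; writing $[\cdot]$ for $\{\pm1\}$-orbits, $\mathfrak S_4$ acts on the right on the orbit set by $[a,b,c,\lambda](1\,2)=[a,b,c^{-1},\lambda]$,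 $[a,b,c,\lambda](3\,4)=[a^{-1},b,c,\lambda]$, $[a,b,c,\lambda](2\,3)=[a/s,b/s,c/s,\lambda/s]$ with $s=\sqrt{abc\lambda q}$. $(a,b,c,\lambda)\approx(\bar a,\bar b,\bar c,\bar\lambda)$ means their $\{\pm1\}$-orbits lie in the same $\mathfrak S_4$-orbit. *)

theory Defs
  imports "HOL-Computational_Algebra.Polynomial"
begin

type_synonym 'a quad = "'a \<times> 'a \<times> 'a \<times> 'a"

definition nonzero4 :: "'a::field quad \<Rightarrow> bool" where
  "nonzero4 x = (case x of (a,b,c,l) \<Rightarrow> a \<noteq> 0 \<and> b \<noteq> 0 \<and> c \<noteq> 0 \<and> l \<noteq> 0)"

definition root_of_unity_order :: "'a::field \<Rightarrow> nat \<Rightarrow> bool" where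
  "root_of_unity_order q d = (0 < d \<and> q ^ d = 1 \<and> (\<forall>k. 0 < k \<and> k < d \<longrightarrow> q ^ k \<noteq> 1))"

definition feasible :: "'a::field \<Rightarrow> 'a quad \<Rightarrow> 'a quad \<Rightarrow> bool" where
  "feasible q x p = (case x of (a,b,c,l) \<Rightarrow> case p of (mu,phi,ws,we) \<Rightarrow>
     mu = b / l \<and>
     phi = (c + inverse c) * (l - inverse l) - (a + inverse a) * (b * q - inverse b * inverse q) \<and>
     ws = (c + inverse c) * (a + inverse a) + (b + inverse b) * (l * q + inverse l * inverse q) \<and>
     we = (a + inverse a) * (b + inverse b) + (c + inverse c) * (l * q + inverse l * inverse q))"

text \<open>Representatives of the generator actions of (1 2), (3 4), (2 3) and of -1,
  with sq a fixed square-root function.\<close>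
definition act12 :: "'a::field quad \<Rightarrow> 'a quad" where
  "act12 x = (case x of (a,b,c,l) \<Rightarrow> (a, b, inverse c, l))"

definition act34 :: "'a::field quad \<Rightarrow> 'a quad" where
  "act34 x = (case x of (a,b,c,l) \<Rightarrow> (inverse a, b, c, l))"

definition act23 :: "('a::field \<Rightarrow> 'a) \<Rightarrow> 'a \<Rightarrow> 'a quad \<Rightarrow> 'a quad" where
  "act23 sq q x = (case x of (a,b,c,l) \<Rightarrow>
     (let s = sq (a * b * c * l * q) in (a / s, b / s, c / s, l / s)))"

definition negq :: "'a::field quad \<Rightarrow> 'a quad" where
  "negq x = (case x of (a,b,c,l) \<Rightarrow> (-a, -b, -c, -l))"

definition gen_step :: "('a::field \<Rightarrow> 'a) \<Rightarrow> 'a \<Rightarrow> 'a quad \<Rightarrow> 'a quad \<Rightarrow> bool" where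
  "gen_step sq q x y = (y = negq x \<or> y = act12 x \<or> y = act34 x \<or> y = act23 sq q x)"

text \<open>x \<approx> y: both in (F^*)^4 and their {+-1}-orbits lie in the same S_4-orbit,
  i.e. y is reachable from x by the equivalence closure of the generator steps.\<close>
definition approx :: "('a::field \<Rightarrow> 'a) \<Rightarrow> 'a \<Rightarrow> 'a quad \<Rightarrow> 'a quad \<Rightarrow> bool" where
  "approx sq q x y = (nonzero4 x \<and> nonzero4 y \<and> equivclp (gen_step sq q) x y)"

end

theory Submission
  imports Defs
begin

definition Sv :: "'a::field \<Rightarrow> 'a quad \<Rightarrow> 'a quad" where
  "Sv rho x = (case x of (a,b,c,l) \<Rightarrow> (c/(rho*l), inverse (c*rho*l), a*rho*l, rho*l/a))"

definition el1 :: "'a::field quad \<Rightarrow> 'a" where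
  "el1 s = (case s of (s1,s2,s3,s4) \<Rightarrow> s1+s2+s3+s4)"
definition el2 :: "'a::field quad \<Rightarrow> 'a" where
  "el2 s = (case s of (s1,s2,s3,s4) \<Rightarrow> s1*s2+s1*s3+s1*s4+s2*s3+s2*s4+s3*s4)"
definition el3 :: "'a::field quad \<Rightarrow> 'a" where
  "el3 s = (case s of (s1,s2,s3,s4) \<Rightarrow> s1*s2*s3+s1*s2*s4+s1*s3*s4+s2*s3*s4)"
definition el4 :: "'a::field quad \<Rightarrow> 'a" where
  "el4 s = (case s of (s1,s2,s3,s4) \<Rightarrow> s1*s2*s3*s4)"

lemma feas_char:
  fixes a c l rho q mu :: "'a::field"
  assumes nz: "a \<noteq> 0" "c \<noteq> 0" "l \<noteq> 0" "rho \<noteq> 0" "mu \<noteq> 0"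
    and rq: "q = rho^2 / mu"
  defines "s \<equiv> Sv rho (a, mu*l, c, l)"
  shows "(c + inverse c) * (l - inverse l) - (a + inverse a) * (mu*l * q - inverse (mu*l) * inverse q)
          = - rho * el1 s + el3 s / rho"
    and "(c + inverse c) * (a + inverse a) + (mu*l + inverse (mu*l)) * (l * q + inverse l * inverse q)
          = el2 s + mu/q + q/mu"
    and "(a + inverse a) * (mu*l + inverse (mu*l)) + (c + inverse c) * (l * q + inverse l * inverse q)
          = (mu/rho) * el1 s + (rho/mu) * el3 s"
    and "el4 s = 1"
  using nz unfolding s_def Sv_def el1_def el2_def el3_def el4_def rq
  by (simp_all add: field_simps power2_eq_square) (simp_all add: algebra_simps)?

lemma lin_equiv:
  fixes rho q mu phi we e1 e3 :: "'a::field"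
  assumes "rho \<noteq> 0" "mu \<noteq> 0" "q = rho^2/mu" "1 + q^2 \<noteq> 0"
  shows "(phi = - rho * e1 + e3 / rho \<and> we = (mu/rho) * e1 + (rho/mu) * e3) \<longleftrightarrow>
         (e1 = rho*(we - q*phi)/(mu*(1+q^2)) \<and> e3 = rho*phi + q*mu*e1)"
proof
  assume h: "phi = - rho * e1 + e3 / rho \<and> we = (mu/rho) * e1 + (rho/mu) * e3"
  have e3: "e3 = rho*phi + q*mu*e1" using h assms by (simp add: assms(3) field_simps power2_eq_square)
  have "we = e1 * (mu*(1+q^2)/rho) + q*phi" using h e3 assms by (simp add: assms(3) field_simps power2_eq_square)
  hence k: "e1 * (mu*(1+q^2)/rho) = we - q*phi" by simp
  have "mu*(1+q^2)/rho \<noteq> 0" using assms by simp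
  with k have "e1 = (we - q*phi) / (mu*(1+q^2)/rho)" by (metis nonzero_mult_div_cancel_right)
  hence "e1 = rho*(we - q*phi)/(mu*(1+q^2))" by (simp add: mult.commute)
  with e3 show "e1 = rho*(we - q*phi)/(mu*(1+q^2)) \<and> e3 = rho*phi + q*mu*e1" by simp
next
  assume h: "e1 = rho*(we - q*phi)/(mu*(1+q^2)) \<and> e3 = rho*phi + q*mu*e1"
  hence e3: "e3 = rho*phi + q*mu*e1" by simp
  have p: "phi = - rho * e1 + e3 / rho" using e3 assms by (simp add: assms(3) field_simps power2_eq_square)
  have "(mu/rho) * e1 + (rho/mu) * e3 = e1 * (mu*(1+q^2)/rho) + q*phi"
    using e3 assms by (simp add: assms(3) field_simps power2_eq_square)
  also have "e1 * (mu*(1+q^2)/rho) = we - q*phi" using h assms by simp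
  finally show "phi = - rho * e1 + e3 / rho \<and> we = (mu/rho) * e1 + (rho/mu) * e3" using p by simp
qed

lemma quad_roots:
  fixes p r :: "'a::alg_closed_field"
  shows "\<exists>x y. x + y = p \<and> x * y = r"
proof -
  have "\<exists>x. poly [:r, -p, 1:] x = 0" by (rule alg_closed_imp_poly_has_root) simp
  then obtain x where "poly [:r, -p, 1:] x = 0" by blast
  hence "r - p*x + x*x = 0" by (simp add: algebra_simps)
  hence "x + (p - x) = p \<and> x * (p - x) = r" by (simp add: algebra_simps)
  thus ?thesis by blast
qed

lemma cubic_roots:
  fixes e1 e2 e3 :: "'a::alg_closed_field"
  shows "\<exists>x y z. x + y + z = e1 \<and> x*y + x*z + y*z = e2 \<and> x*y*z = e3"
proof -
  have "\<exists>x. poly [:-e3, e2, -e1, 1:] x = 0" by (rule alg_closed_imp_poly_has_root) simp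
  then obtain x where "poly [:-e3, e2, -e1, 1:] x = 0" by blast
  hence hx: "-e3 + e2*x - e1*x*x + x*x*x = 0" by (simp add: algebra_simps)
  obtain y z where yz: "y + z = e1 - x" "y * z = e2 - x*(e1 - x)" using quad_roots by blast
  have "x*y*z = x*(e2 - x*(e1-x))" using yz by (simp add: mult.assoc)
  also have "\<dots> = e3" using hx by algebra
  finally have "x*y*z = e3" .
  moreover have "x + y + z = e1" using yz by (simp add: algebra_simps)
  moreover have "x*y + x*z + y*z = e2" using yz by algebra
  ultimately show ?thesis by blast
qed

lemma quartic_roots:
  fixes e1 e2 e3 e4 :: "'a::alg_closed_field"
  shows "\<exists>s1 s2 s3 s4. s1+s2+s3+s4 = e1 \<and> s1*s2+s1*s3+s1*s4+s2*s3+s2*s4+s3*s4 = e2 \<and>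
     s1*s2*s3+s1*s2*s4+s1*s3*s4+s2*s3*s4 = e3 \<and> s1*s2*s3*s4 = e4"
proof -
  have "\<exists>x. poly [:e4, -e3, e2, -e1, 1:] x = 0" by (rule alg_closed_imp_poly_has_root) simp
  then obtain x where "poly [:e4, -e3, e2, -e1, 1:] x = 0" by blast
  hence hx: "e4 - e3*x + e2*x*x - e1*x*x*x + x*x*x*x = 0" by (simp add: algebra_simps)
  obtain y z w where yz: "y + z + w = e1 - x" "y*z + y*w + z*w = e2 - x*(e1 - x)"
     "y*z*w = e3 - x*(e2 - x*(e1 - x))" using cubic_roots by blast
  have "x*y*z*w = x*(y*z*w)" by (simp add: mult.assoc)
  also have "\<dots> = x*(e3 - x*(e2 - x*(e1 - x)))" using yz by simp
  also have "\<dots> = e4" using hx by algebra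
  finally have "x*y*z*w = e4" .
  moreover have "x + y + z + w = e1" using yz by (simp add: algebra_simps)
  moreover have "x*y+x*z+x*w+y*z+y*w+z*w = e2" using yz by algebra
  moreover have "x*y*z+x*y*w+x*z*w+y*z*w = e3" using yz by algebra
  ultimately show ?thesis by blast
qed

lemma perm2:
  fixes P :: "'a::idom \<times> 'a \<Rightarrow> bool"
  assumes sw: "\<And>u v. P (u,v) \<Longrightarrow> P (v,u)" and p: "P (s1,s2)"
    and e: "s1+s2 = t1+t2" "s1*s2 = t1*t2"
  shows "P (t1,t2)"
proof -
  have "(t1 - s1)*(t1 - s2) = 0" using e by algebra
  hence "t1 = s1 \<or> t1 = s2" by simp
  thus ?thesis
  proof
    assume "t1 = s1" thus ?thesis using p e by simp
  next
    assume "t1 = s2" hence "t2 = s1" using e by (simp add: algebra_simps)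
    thus ?thesis using sw[OF p] \<open>t1 = s2\<close> by simp
  qed
qed

lemma perm3:
  fixes P :: "'a::idom \<times> 'a \<times> 'a \<Rightarrow> bool"
  assumes sw1: "\<And>u v w. P (u,v,w) \<Longrightarrow> P (v,u,w)"
    and sw2: "\<And>u v w. P (u,v,w) \<Longrightarrow> P (u,w,v)" and p: "P (s1,s2,s3)"
    and e: "s1+s2+s3 = t1+t2+t3" "s1*s2+s1*s3+s2*s3 = t1*t2+t1*t3+t2*t3" "s1*s2*s3 = t1*t2*t3"
  shows "P (t1,t2,t3)"
proof -
  have key: "P (t1,t2,t3)" if q: "P (t1,u,v)" and f: "t1+u+v = t1+t2+t3" "t1*u+t1*v+u*v = t1*t2+t1*t3+t2*t3" for u v
  proof -
    have f1: "u+v = t2+t3" using f by simp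
    have "t1*(u+v) + u*v = t1*(t2+t3) + t2*t3" using f(2) by (simp add: algebra_simps)
    hence "u*v = t2*t3" using f1 by simp
    have "(\<lambda>(a,b). P (t1,a,b)) (t2,t3)"
    proof (rule perm2[of "\<lambda>(a,b). P (t1,a,b)" u v t2 t3])
      show "\<And>a b. (\<lambda>(a,b). P (t1,a,b)) (a,b) \<Longrightarrow> (\<lambda>(a,b). P (t1,a,b)) (b,a)"
        using sw2 by simp
    qed (use q f1 \<open>u*v = t2*t3\<close> in simp_all)
    thus ?thesis by simp
  qed
  have "(t1 - s1)*(t1 - s2)*(t1 - s3) = t1^3 - (s1+s2+s3)*t1^2 + (s1*s2+s1*s3+s2*s3)*t1 - s1*s2*s3"
    by algebra
  also have "\<dots> = t1^3 - (t1+t2+t3)*t1^2 + (t1*t2+t1*t3+t2*t3)*t1 - t1*t2*t3" using e by simp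
  also have "\<dots> = 0" by algebra
  finally have "(t1 - s1)*(t1 - s2)*(t1 - s3) = 0" .
  hence "t1 = s1 \<or> t1 = s2 \<or> t1 = s3" by simp
  moreover have ?thesis if "t1 = s1" using key[of s2 s3] p e that by simp
  moreover have ?thesis if "t1 = s2" using key[of s1 s3] sw1[OF p] e that by (simp add: algebra_simps)
  moreover have ?thesis if "t1 = s3" using key[of s1 s2] sw1[OF sw2[OF p]] e that by (simp add: algebra_simps)
  ultimately show ?thesis by blast
qed

lemma el_sw:
  "el1 (v,u,w,x) = el1 (u,v,w,x)" "el2 (v,u,w,x) = el2 (u,v,w,x)" "el3 (v,u,w,x) = el3 (u,v,w,x)" "el4 (v,u,w,x) = el4 (u,v,w,x)"
  "el1 (u,w,v,x) = el1 (u,v,w,x)" "el2 (u,w,v,x) = el2 (u,v,w,x)" "el3 (u,w,v,x) = el3 (u,v,w,x)" "el4 (u,w,v,x) = el4 (u,v,w,x)"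
  "el1 (u,v,x,w) = el1 (u,v,w,x)" "el2 (u,v,x,w) = el2 (u,v,w,x)" "el3 (u,v,x,w) = el3 (u,v,w,x)" "el4 (u,v,x,w) = el4 (u,v,w,x)"
  by (simp_all add: el1_def el2_def el3_def el4_def algebra_simps)

lemma perm4:
  fixes P :: "'a::field quad \<Rightarrow> bool"
  assumes sw1: "\<And>u v w x. P (u,v,w,x) \<Longrightarrow> P (v,u,w,x)"
    and sw2: "\<And>u v w x. P (u,v,w,x) \<Longrightarrow> P (u,w,v,x)"
    and sw3: "\<And>u v w x. P (u,v,w,x) \<Longrightarrow> P (u,v,x,w)" and p: "P (s1,s2,s3,s4)"
    and e: "el1 (s1,s2,s3,s4) = el1 (t1,t2,t3,t4)" "el2 (s1,s2,s3,s4) = el2 (t1,t2,t3,t4)"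
      "el3 (s1,s2,s3,s4) = el3 (t1,t2,t3,t4)" "el4 (s1,s2,s3,s4) = el4 (t1,t2,t3,t4)"
  shows "P (t1,t2,t3,t4)"
proof -
  have key: "P (t1,t2,t3,t4)" if q: "P (t1,u,v,w)" and f: "el1 (t1,u,v,w) = el1 (t1,t2,t3,t4)"
    "el2 (t1,u,v,w) = el2 (t1,t2,t3,t4)" "el3 (t1,u,v,w) = el3 (t1,t2,t3,t4)" for u v w
  proof -
    have f1: "u+v+w = t2+t3+t4" using f(1) by (simp add: el1_def add.assoc)
    have "t1*(u+v+w) + (u*v+u*w+v*w) = t1*(t2+t3+t4) + (t2*t3+t2*t4+t3*t4)"
      using f(2) by (simp add: el2_def algebra_simps)
    hence f2: "u*v+u*w+v*w = t2*t3+t2*t4+t3*t4" using f1 by simp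
    have "t1*(u*v+u*w+v*w) + u*v*w = t1*(t2*t3+t2*t4+t3*t4) + t2*t3*t4"
      using f(3) by (simp add: el3_def algebra_simps)
    hence f3: "u*v*w = t2*t3*t4" using f2 by simp
    have "(\<lambda>(a,b,c). P (t1,a,b,c)) (t2,t3,t4)"
    proof (rule perm3[of "\<lambda>(a,b,c). P (t1,a,b,c)" u v w t2 t3 t4])
      show "\<And>a b c. (\<lambda>(a,b,c). P (t1,a,b,c)) (a,b,c) \<Longrightarrow> (\<lambda>(a,b,c). P (t1,a,b,c)) (b,a,c)"
        using sw2 by simp
      show "\<And>a b c. (\<lambda>(a,b,c). P (t1,a,b,c)) (a,b,c) \<Longrightarrow> (\<lambda>(a,b,c). P (t1,a,b,c)) (a,c,b)"
        using sw3 by simp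
    qed (use q f1 f2 f3 in simp_all)
    thus ?thesis by simp
  qed
  have "(t1 - s1)*(t1 - s2)*(t1 - s3)*(t1 - s4) = t1^4 - el1 (s1,s2,s3,s4)*t1^3
     + el2 (s1,s2,s3,s4)*t1^2 - el3 (s1,s2,s3,s4)*t1 + el4 (s1,s2,s3,s4)"
    unfolding el1_def el2_def el3_def el4_def by simp algebra
  also have "\<dots> = t1^4 - el1 (t1,t2,t3,t4)*t1^3
     + el2 (t1,t2,t3,t4)*t1^2 - el3 (t1,t2,t3,t4)*t1 + el4 (t1,t2,t3,t4)" using e by simp
  also have "\<dots> = 0" unfolding el1_def el2_def el3_def el4_def by simp algebra
  finally have "(t1 - s1)*(t1 - s2)*(t1 - s3)*(t1 - s4) = 0" .
  hence "t1 = s1 \<or> t1 = s2 \<or> t1 = s3 \<or> t1 = s4" by simp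
  moreover have ?thesis if "t1 = s1" using key[of s2 s3 s4] p e that by simp
  moreover have ?thesis if "t1 = s2" using key[of s1 s3 s4] sw1[OF p] e that by (simp add: el_sw)
  moreover have ?thesis if "t1 = s3" using key[of s1 s2 s4] sw1[OF sw2[OF p]] e that by (simp add: el_sw)
  moreover have ?thesis if "t1 = s4" using key[of s1 s2 s3] sw1[OF sw2[OF sw3[OF p]]] e that by (simp add: el_sw)
  ultimately show ?thesis by blast
qed

definition Tg :: "'a::field \<Rightarrow> 'a \<Rightarrow> 'a \<Rightarrow> 'a \<Rightarrow> 'a \<Rightarrow> 'a \<Rightarrow> 'a quad \<Rightarrow> bool" where
  "Tg rho q mu phi ws we s \<longleftrightarrow> el1 s = rho*(we - q*phi)/(mu*(1+q^2)) \<and>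
     el3 s = rho*phi + q*mu*(rho*(we - q*phi)/(mu*(1+q^2))) \<and> el2 s = ws - mu/q - q/mu \<and> el4 s = 1"

lemma Tg_sw:
  "Tg rho q mu phi ws we (v,u,w,x) = Tg rho q mu phi ws we (u,v,w,x)"
  "Tg rho q mu phi ws we (u,w,v,x) = Tg rho q mu phi ws we (u,v,w,x)"
  "Tg rho q mu phi ws we (u,v,x,w) = Tg rho q mu phi ws we (u,v,w,x)"
  unfolding Tg_def el_sw by simp_all

lemma char:
  fixes a b c l rho q mu phi ws we :: "'a::field"
  assumes "mu \<noteq> 0" "rho \<noteq> 0" "q = rho^2/mu" "1 + q^2 \<noteq> 0"
  shows "(nonzero4 (a,b,c,l) \<and> feasible q (a,b,c,l) (mu,phi,ws,we)) \<longleftrightarrow>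
    (a \<noteq> 0 \<and> c \<noteq> 0 \<and> l \<noteq> 0 \<and> b = mu*l \<and> Tg rho q mu phi ws we (Sv rho (a,b,c,l)))"
proof (cases "a \<noteq> 0 \<and> c \<noteq> 0 \<and> l \<noteq> 0 \<and> b = mu*l")
  case True
  hence nz: "a \<noteq> 0" "c \<noteq> 0" "l \<noteq> 0" and bb: "b = mu*l" by auto
  have "b \<noteq> 0" using bb nz assms by simp
  hence n4: "nonzero4 (a,b,c,l)" using nz by (simp add: nonzero4_def)
  have mub: "mu = b / l" using bb nz by simp
  note fc = feas_char[OF nz assms(2,1,3)]
  define s where "s = Sv rho (a, mu*l, c, l)"
  have qnz: "q \<noteq> 0" using assms by simp
  have "feasible q (a,b,c,l) (mu,phi,ws,we) \<longleftrightarrow>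
     (phi = - rho * el1 s + el3 s / rho \<and> ws = el2 s + mu/q + q/mu \<and>
      we = (mu/rho) * el1 s + (rho/mu) * el3 s)"
    unfolding feasible_def using mub fc unfolding bb s_def by auto
  also have "\<dots> \<longleftrightarrow> ((phi = - rho * el1 s + el3 s / rho \<and> we = (mu/rho) * el1 s + (rho/mu) * el3 s)
      \<and> el2 s = ws - mu/q - q/mu)" by (auto simp: algebra_simps)
  also have "\<dots> \<longleftrightarrow> Tg rho q mu phi ws we s"
    unfolding lin_equiv[OF assms(2,1,3,4)] Tg_def using fc(4) unfolding s_def by auto
  finally show ?thesis using True n4 unfolding s_def bb by simp
next
  case False
  show ?thesis
  proof -
    have "\<not> (nonzero4 (a,b,c,l) \<and> feasible q (a,b,c,l) (mu,phi,ws,we))"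
    proof
      assume h: "nonzero4 (a,b,c,l) \<and> feasible q (a,b,c,l) (mu,phi,ws,we)"
      hence "a \<noteq> 0" "c \<noteq> 0" "l \<noteq> 0" "mu = b / l" by (auto simp: nonzero4_def feasible_def)
      thus False using False by simp
    qed
    thus ?thesis using False by blast
  qed
qed

lemma Sv_act12: "Sv rho (act12 (a,b,c,l)) = (case Sv rho (a,b,c,l) of (u,v,w,x) \<Rightarrow> (v,u,w,x))"
  by (simp add: Sv_def act12_def field_simps)

lemma Sv_act34: "Sv rho (act34 (a,b,c,l)) = (case Sv rho (a,b,c,l) of (u,v,w,x) \<Rightarrow> (u,v,x,w))"
  by (simp add: Sv_def act34_def field_simps)

lemma Sv_negq: "Sv rho (negq (a,b,c,l)) = Sv rho (a,b,c,l)"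
  by (simp add: Sv_def negq_def)

lemma Sv_div:
  fixes a b c l rho q mu sg :: "'a::field"
  assumes nz: "a \<noteq> 0" "c \<noteq> 0" "l \<noteq> 0" "rho \<noteq> 0" "mu \<noteq> 0" "q \<noteq> 0"
    and bb: "b = mu*l" and rq: "rho^2 = q*mu" and sg: "sg^2 = a*b*c*l*q"
  shows "Sv rho (a/sg, b/sg, c/sg, l/sg) = (case Sv rho (a,b,c,l) of (u,v,w,x) \<Rightarrow> (u,w,v,x))"
proof -
  have sgnz: "sg \<noteq> 0" using sg nz bb by auto
  have 1: "(c/sg)/(rho*(l/sg)) = c/(rho*l)" using sgnz nz by (simp add: field_simps)
  have 4: "rho*(l/sg)/(a/sg) = rho*l/a" using sgnz nz by (simp add: field_simps)
  have "inverse (c/sg*rho*(l/sg)) = sg^2 / (c*rho*l)" using sgnz nz by (simp add: field_simps power2_eq_square)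
  also have "\<dots> = a*mu*l*l*q/(rho*l)" unfolding sg bb using nz by (simp add: field_simps)
  also have "\<dots> = a*l*(q*mu)/rho" using nz by (simp add: field_simps)
  also have "\<dots> = a*rho*l" unfolding rq[symmetric] using nz by (simp add: field_simps power2_eq_square)
  finally have 2: "inverse (c/sg*rho*(l/sg)) = a*rho*l" .
  have "a/sg*rho*(l/sg) = a*rho*l / sg^2" using sgnz by (simp add: field_simps power2_eq_square)
  also have "\<dots> = rho / (c*l*(q*mu))" unfolding sg bb using nz by (simp add: field_simps)
  also have "\<dots> = inverse (c*rho*l)" unfolding rq[symmetric] using nz by (simp add: field_simps power2_eq_square)
  finally have 3: "a/sg*rho*(l/sg) = inverse (c*rho*l)" .
  show ?thesis by (simp only: Sv_def prod.case 1 2 3 4)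
qed

lemma step_iff:
  fixes rho q mu phi ws we :: "'a::field" and sq :: "'a \<Rightarrow> 'a"
  assumes mu: "mu \<noteq> 0" and rho: "rho \<noteq> 0" and rq: "rho^2 = q*mu" and q2: "1 + q^2 \<noteq> 0"
    and sq: "\<forall>x. (sq x)^2 = x"
    and st: "gen_step sq q w z"
  shows "(nonzero4 z \<and> feasible q z (mu,phi,ws,we)) \<longleftrightarrow> (nonzero4 w \<and> feasible q w (mu,phi,ws,we))"
proof -
  have qq: "q = rho^2/mu" using rq mu by simp
  have qnz: "q \<noteq> 0" using rq rho mu by auto
  note ch = char[OF mu rho qq q2]
  obtain a b c l where w: "w = (a,b,c,l)" by (cases w) auto
  obtain u v y x where sv: "Sv rho (a,b,c,l) = (u,v,y,x)" by (cases "Sv rho (a,b,c,l)") auto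
  have "z = negq w \<or> z = act12 w \<or> z = act34 w \<or> z = act23 sq q w" using st by (simp add: gen_step_def)
  moreover have ?thesis if "z = negq w"
  proof -
    have z: "z = (-a,-b,-c,-l)" using that w by (simp add: negq_def)
    have "(-b = mu * - l) \<longleftrightarrow> b = mu*l" by auto
    thus ?thesis unfolding z w ch Sv_negq[of rho a b c l, unfolded negq_def prod.case] by simp
  qed
  moreover have ?thesis if "z = act12 w"
  proof -
    have z: "z = (a,b,inverse c,l)" using that w by (simp add: act12_def)
    have "Sv rho (a,b,inverse c,l) = (v,u,y,x)" using Sv_act12[of rho a b c l] sv unfolding act12_def by simp
    thus ?thesis unfolding z w ch using sv by (simp add: Tg_sw)
  qed
  moreover have ?thesis if "z = act34 w"
  proof -
    have z: "z = (inverse a,b,c,l)" using that w by (simp add: act34_def)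
    have "Sv rho (inverse a,b,c,l) = (u,v,x,y)" using Sv_act34[of rho a b c l] sv unfolding act34_def by simp
    thus ?thesis unfolding z w ch using sv by (simp add: Tg_sw)
  qed
  moreover have ?thesis if "z = act23 sq q w"
  proof -
    define sg where "sg = sq (a*b*c*l*q)"
    have sg2: "sg^2 = a*b*c*l*q" using sq unfolding sg_def by simp
    have z: "z = (a/sg,b/sg,c/sg,l/sg)" using that w by (simp add: act23_def sg_def Let_def)
    show ?thesis
    proof
      assume h: "nonzero4 z \<and> feasible q z (mu,phi,ws,we)"
      hence hh: "a/sg \<noteq> 0" "c/sg \<noteq> 0" "l/sg \<noteq> 0" "b/sg = mu*(l/sg)" "Tg rho q mu phi ws we (Sv rho z)"
        unfolding z ch by auto
      hence nz: "a \<noteq> 0" "c \<noteq> 0" "l \<noteq> 0" "sg \<noteq> 0" by auto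
      hence bb: "b = mu*l" using hh(4) by (simp add: field_simps)
      have "Sv rho z = (u,y,v,x)" using Sv_div[OF nz(1,2,3) rho mu qnz bb rq sg2] sv z by simp
      hence "Tg rho q mu phi ws we (u,v,y,x)" using hh(5) by (simp add: Tg_sw)
      thus "nonzero4 w \<and> feasible q w (mu,phi,ws,we)" unfolding w ch using nz bb sv by simp
    next
      assume h: "nonzero4 w \<and> feasible q w (mu,phi,ws,we)"
      hence nz: "a \<noteq> 0" "c \<noteq> 0" "l \<noteq> 0" and bb: "b = mu*l" and tg: "Tg rho q mu phi ws we (u,v,y,x)"
        unfolding w ch using sv by auto
      have sgnz: "sg \<noteq> 0" using sg2 nz bb mu qnz by auto
      have "Sv rho z = (u,y,v,x)" using Sv_div[OF nz(1,2,3) rho mu qnz bb rq sg2] sv z by simp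
      hence "Tg rho q mu phi ws we (Sv rho z)" using tg by (simp add: Tg_sw)
      moreover have "b/sg = mu*(l/sg)" using bb by simp
      ultimately show "nonzero4 z \<and> feasible q z (mu,phi,ws,we)" unfolding z ch using nz sgnz by simp
    qed
  qed
  ultimately show ?thesis by blast
qed

lemma Sv_inj:
  fixes a b c l a' b' c' l' rho mu :: "'a::field"
  assumes nz: "a \<noteq> 0" "c \<noteq> 0" "l \<noteq> 0" "a' \<noteq> 0" "c' \<noteq> 0" "l' \<noteq> 0" "rho \<noteq> 0"
    and bb: "b = mu*l" "b' = mu*l'"
    and eq: "Sv rho (a,b,c,l) = Sv rho (a',b',c',l')"
  shows "(a',b',c',l') = (a,b,c,l) \<or> (a',b',c',l') = negq (a,b,c,l)"
proof -
  have e1: "c/(rho*l) = c'/(rho*l')" and e3: "a*rho*l = a'*rho*l'" and e4: "rho*l/a = rho*l'/a'"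
    using eq by (simp_all add: Sv_def)
  have "(a*rho*l)*(rho*l/a) = (a'*rho*l')*(rho*l'/a')" by (simp only: e3 e4)
  hence "(rho*l)^2 = (rho*l')^2" using nz by (simp add: field_simps power2_eq_square)
  hence "l^2 = l'^2" using nz by (simp add: power_mult_distrib)
  hence "l' = l \<or> l' = -l" by (metis power2_eq_iff)
  thus ?thesis
  proof
    assume ll: "l' = l"
    have "a' = a" using e3 ll nz by simp
    moreover have "c' = c" using e1 ll nz by (simp add: field_simps)
    ultimately show ?thesis using ll bb by simp
  next
    assume ll: "l' = -l"
    have "a*(rho*l) = (-a')*(rho*l)" using e3 ll by (simp add: algebra_simps)
    hence "a = -a'" using nz by (metis mult_cancel_right mult_eq_0_iff)
    hence "a' = -a" by simp
    moreover have "c' = -c" using e1 ll nz by (simp add: field_simps)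
    ultimately show ?thesis using ll bb by (simp add: negq_def)
  qed
qed

lemma reach_inv:
  fixes rho q mu phi ws we :: "'a::field" and sq :: "'a \<Rightarrow> 'a"
  assumes mu: "mu \<noteq> 0" and rho: "rho \<noteq> 0" and rq: "rho^2 = q*mu" and q2: "1 + q^2 \<noteq> 0"
    and sq: "\<forall>x. (sq x)^2 = x"
    and r: "equivclp (gen_step sq q) x y" and ix: "nonzero4 x \<and> feasible q x (mu,phi,ws,we)"
  shows "nonzero4 y \<and> feasible q y (mu,phi,ws,we)"
  using r[unfolded equivclp_def]
proof (induction rule: rtranclp_induct)
  case base
  then show ?case using ix .
next
  case (step y z)
  from step.hyps(2) show ?case
  proof (cases rule: symclpE)
    case base
    then show ?thesis using step_iff[OF mu rho rq q2 sq base] step.IH by blast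
  next
    case sym
    then show ?thesis using step_iff[OF mu rho rq q2 sq sym] step.IH by blast
  qed
qed

lemma q_facts:
  fixes q :: "'a::field"
  assumes "root_of_unity_order q d" and "d \<notin> {1, 2, 4}"
  shows "q \<noteq> 0" "1 + q^2 \<noteq> 0"
proof -
  have d: "0 < d" "q^d = 1" "\<And>k. 0 < k \<Longrightarrow> k < d \<Longrightarrow> q^k \<noteq> 1"
    using assms(1) unfolding root_of_unity_order_def by auto
  show "q \<noteq> 0" using d(1,2) by (metis power_0_left less_irrefl zero_neq_one)
  show "1 + q^2 \<noteq> 0"
  proof
    assume h: "1 + q^2 = 0"
    hence q2: "q^2 = -1" by (simp add: eq_neg_iff_add_eq_0 add.commute)
    have q4: "q^4 = 1" proof - have "q^4 = (q^2)^2" by (simp add: power_mult[symmetric])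
      thus ?thesis using q2 by simp qed
    have "d = 3 \<or> 4 < d" using assms(2) d(1) by auto
    thus False
    proof
      assume "d = 3"
      hence "q^3 = 1" using d(2) by simp
      moreover have "q^3 = q * q^2" by (simp add: power2_eq_square power3_eq_cube)
      ultimately have "- q = 1" using q2 by simp
      hence "q = -1" by (simp add: minus_equation_iff)
      hence "q^1 = 1" using q2 by simp
      thus False using d(3)[of 1] \<open>d = 3\<close> by simp
    next
      assume "4 < d" thus False using d(3)[of 4] q4 by simp
    qed
  qed
qed

theorem theorem5p2:
  fixes q mu phi ws we :: "'a::alg_closed_field"
    and sq :: "'a \<Rightarrow> 'a" and d :: nat
  assumes "root_of_unity_order q d" and "d \<notin> {1, 2, 4}"
    and "\<forall>x. (sq x)\<^sup>2 = x"
    and "mu \<noteq> 0"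
  shows "(\<exists>x. nonzero4 x \<and> feasible q x (mu, phi, ws, we)) \<and>
         (\<forall>x. nonzero4 x \<and> feasible q x (mu, phi, ws, we) \<longrightarrow>
              {y. approx sq q x y} = {y. nonzero4 y \<and> feasible q y (mu, phi, ws, we)})"
proof -
  note qf = q_facts[OF assms(1,2)]
  have mu: "mu \<noteq> 0" by fact
  have sq: "\<forall>x. (sq x)^2 = x" using assms(3) by simp
  define rho where "rho = sq (q*mu)"
  have rq: "rho^2 = q*mu" using sq unfolding rho_def by simp
  have rho: "rho \<noteq> 0" using rq qf(1) mu by auto
  have qq: "q = rho^2/mu" using rq mu by simp
  note ch = char[OF mu rho qq qf(2)]
  let ?I = "\<lambda>w. nonzero4 w \<and> feasible q w (mu, phi, ws, we)"
  have part1: "\<exists>x. ?I x"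
  proof -
    obtain s1 s2 s3 s4 where ss: "s1+s2+s3+s4 = rho*(we - q*phi)/(mu*(1+q^2))"
      "s1*s2+s1*s3+s1*s4+s2*s3+s2*s4+s3*s4 = ws - mu/q - q/mu"
      "s1*s2*s3+s1*s2*s4+s1*s3*s4+s2*s3*s4 = rho*phi + q*mu*(rho*(we - q*phi)/(mu*(1+q^2)))"
      "s1*s2*s3*s4 = 1"
      using quartic_roots[of "rho*(we - q*phi)/(mu*(1+q^2))" "ws - mu/q - q/mu"
        "rho*phi + q*mu*(rho*(we - q*phi)/(mu*(1+q^2)))" 1] by blast
    have snz: "s1 \<noteq> 0" "s2 \<noteq> 0" "s3 \<noteq> 0" "s4 \<noteq> 0" using ss(4) by auto
    define r where "r = sq (s3*s4)"
    have r2: "r^2 = s3*s4" using sq unfolding r_def by simp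
    have rnz: "r \<noteq> 0" using r2 snz by auto
    define a where "a = s3/r"
    define c where "c = s1*r"
    define l where "l = r/rho"
    have nz: "a \<noteq> 0" "c \<noteq> 0" "l \<noteq> 0" using snz rnz rho by (auto simp: a_def c_def l_def)
    have "Sv rho (a, mu*l, c, l) = (s1,s2,s3,s4)"
    proof -
      have 1: "c/(rho*l) = s1" using rnz rho by (simp add: c_def l_def)
      have "inverse (c*rho*l) = inverse (s1*r^2)" using rnz rho by (simp add: c_def l_def power2_eq_square)
      also have "\<dots> = s2" unfolding r2 using ss(4) snz by (simp add: field_simps)
      finally have 2: "inverse (c*rho*l) = s2" .
      have 3: "a*rho*l = s3" using rnz rho by (simp add: a_def l_def)
      have "rho*l/a = r^2/s3" using rnz rho snz by (simp add: a_def l_def power2_eq_square)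
      also have "\<dots> = s4" unfolding r2 using snz by simp
      finally have 4: "rho*l/a = s4" .
      show ?thesis by (simp only: Sv_def prod.case 1 2 3 4)
    qed
    hence "Tg rho q mu phi ws we (Sv rho (a, mu*l, c, l))"
      unfolding Tg_def el1_def el2_def el3_def el4_def using ss by (simp only: prod.case)
    hence "?I (a, mu*l, c, l)" unfolding ch using nz by simp
    thus ?thesis by blast
  qed
  have part2: "{y. approx sq q x y} = {y. ?I y}" if ix: "?I x" for x
  proof
    show "{y. approx sq q x y} \<subseteq> {y. ?I y}"
    proof
      fix y assume "y \<in> {y. approx sq q x y}"
      hence "equivclp (gen_step sq q) x y" by (simp add: approx_def)
      thus "y \<in> {y. ?I y}" using reach_inv[OF mu rho rq qf(2) sq _ ix] by simp
    qed
  next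
    show "{y. ?I y} \<subseteq> {y. approx sq q x y}"
    proof
      fix y assume "y \<in> {y. ?I y}"
      hence iy: "?I y" by simp
      define P where "P = (\<lambda>s. \<exists>z. equivclp (gen_step sq q) x z \<and> ?I z \<and> Sv rho z = s)"
      have stepP: "P t" if pz: "P s" and sw: "\<And>z. ?I z \<Longrightarrow> Sv rho z = s \<Longrightarrow> \<exists>z'. gen_step sq q z z' \<and> Sv rho z' = t" for s t
      proof -
        obtain z where z: "equivclp (gen_step sq q) x z" "?I z" "Sv rho z = s" using pz unfolding P_def by blast
        obtain z' where z': "gen_step sq q z z'" "Sv rho z' = t" using sw[OF z(2) z(3)] by blast
        have "equivclp (gen_step sq q) z z'" using z'(1) by (rule r_into_equivclp)
        hence "equivclp (gen_step sq q) x z'" using z(1) by (rule equivclp_trans[rotated])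
        moreover have "?I z'" using step_iff[OF mu rho rq qf(2) sq z'(1)] z(2) by blast
        ultimately show ?thesis using z'(2) unfolding P_def by blast
      qed
      have sw1: "P (v,u,w,t)" if "P (u,v,w,t)" for u v w t
      proof (rule stepP[OF that])
        fix z assume iz: "?I z" and sz: "Sv rho z = (u,v,w,t)"
        obtain a b c l where zz: "z = (a,b,c,l)" by (cases z) auto
        have "gen_step sq q z (act12 z)" by (simp add: gen_step_def)
        moreover have "Sv rho (act12 z) = (v,u,w,t)" using Sv_act12[of rho a b c l] sz zz by simp
        ultimately show "\<exists>z'. gen_step sq q z z' \<and> Sv rho z' = (v,u,w,t)" by blast
      qed
      have sw3: "P (u,v,t,w)" if "P (u,v,w,t)" for u v w t
      proof (rule stepP[OF that])
        fix z assume iz: "?I z" and sz: "Sv rho z = (u,v,w,t)"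
        obtain a b c l where zz: "z = (a,b,c,l)" by (cases z) auto
        have "gen_step sq q z (act34 z)" by (simp add: gen_step_def)
        moreover have "Sv rho (act34 z) = (u,v,t,w)" using Sv_act34[of rho a b c l] sz zz by simp
        ultimately show "\<exists>z'. gen_step sq q z z' \<and> Sv rho z' = (u,v,t,w)" by blast
      qed
      have sw2: "P (u,w,v,t)" if "P (u,v,w,t)" for u v w t
      proof (rule stepP[OF that])
        fix z assume iz: "?I z" and sz: "Sv rho z = (u,v,w,t)"
        obtain a b c l where zz: "z = (a,b,c,l)" by (cases z) auto
        have nz: "a \<noteq> 0" "c \<noteq> 0" "l \<noteq> 0" and bb: "b = mu*l" using iz unfolding zz ch by auto
        define sg where "sg = sq (a*b*c*l*q)"
        have sg2: "sg^2 = a*b*c*l*q" using sq unfolding sg_def by simp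
        have az: "act23 sq q z = (a/sg,b/sg,c/sg,l/sg)" using zz by (simp add: act23_def sg_def Let_def)
        have "gen_step sq q z (act23 sq q z)" by (simp add: gen_step_def)
        moreover have "Sv rho (act23 sq q z) = (u,w,v,t)"
          using Sv_div[OF nz rho mu qf(1) bb rq sg2] sz zz az by simp
        ultimately show "\<exists>z'. gen_step sq q z z' \<and> Sv rho z' = (u,w,v,t)" by blast
      qed
      obtain s1 s2 s3 s4 where sx: "Sv rho x = (s1,s2,s3,s4)" by (cases "Sv rho x") auto
      obtain t1 t2 t3 t4 where sy: "Sv rho y = (t1,t2,t3,t4)" by (cases "Sv rho y") auto
      have px: "P (s1,s2,s3,s4)" unfolding P_def using ix sx reflpD[OF reflp_equivclp, of "gen_step sq q" x] by blast
      obtain a b c l where xx: "x = (a,b,c,l)" by (cases x) auto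
      obtain a' b' c' l' where yy: "y = (a',b',c',l')" by (cases y) auto
      have tx: "Tg rho q mu phi ws we (s1,s2,s3,s4)" using ix sx unfolding xx ch by simp
      have ty: "Tg rho q mu phi ws we (t1,t2,t3,t4)" using iy sy unfolding yy ch by simp
      have "P (t1,t2,t3,t4)"
        by (rule perm4[of P, OF sw1 sw2 sw3 px]) (use tx ty in \<open>simp_all add: Tg_def\<close>)
      then obtain z where z: "equivclp (gen_step sq q) x z" "?I z" "Sv rho z = Sv rho y"
        unfolding P_def sy by blast
      obtain a'' b'' c'' l'' where zz: "z = (a'',b'',c'',l'')" by (cases z) auto
      have nzz: "a'' \<noteq> 0" "c'' \<noteq> 0" "l'' \<noteq> 0" "b'' = mu*l''" using z(2) unfolding zz ch by auto
      have nzy: "a' \<noteq> 0" "c' \<noteq> 0" "l' \<noteq> 0" "b' = mu*l'" using iy unfolding yy ch by auto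
      have "y = z \<or> y = negq z"
        using Sv_inj[OF nzz(1,2,3) nzy(1,2,3) rho nzz(4) nzy(4)] z(3) unfolding zz yy by simp
      hence "equivclp (gen_step sq q) x y"
      proof
        assume "y = z" thus ?thesis using z(1) by simp
      next
        assume "y = negq z"
        hence "gen_step sq q z y" by (simp add: gen_step_def)
        hence "equivclp (gen_step sq q) z y" by (rule r_into_equivclp)
        thus ?thesis using z(1) by (rule equivclp_trans[rotated])
      qed
      thus "y \<in> {y. approx sq q x y}" using ix iy by (simp add: approx_def)
    qed
  qed
  show ?thesis using part1 part2 by blast
qed

end
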